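(* Let $d\ge2$, $G$ a $d$-regular graph on $n$ vertices, $F$ regular, $T=F^{-1}(1-1/d)$ (so $F(T)=1-1/d$) and $p=T\cdot(1-1/d)^d$. Then for every price $p'>0$ and every $T'$ with $T'\cdot F(T')^d=p'$ (i.e. $T'\cdot\mathbf{1}\in\mathcal{N}_{p'\cdot\mathbf{1}}$ is a symmetric equilibrium), $$\mathcal{R}(p\cdot\mathbf{1},T\cdot\mathbf{1})\ \ge\ c\cdot\mathcal{R}(p'\cdot\mathbf{1},T'\cdot\mathbf{1})$$ for an absolute constant $c>0$ (one may take $c=1/16$). Here $\mathcal{R}(p'\cdot\mathbf{1},T'\cdot\mathbf{1})=n\,T'(1-F(T'))F(T')^d$.
   Context: Public-goods pricing game: $n$ buyers are the vertices of an undirected graph $G=([n],E)$; $N(i)=\{j:(i,j)\in E\}$ (so $i\notin N(i)$); $G$ is $d$-regular if $|N(i)|=d$ for all $i$. Values i.i.d. with cumulative distribution function $F$, $F(\infty)=1$. An equilibrium for price vector $\mathbf{p}$ is $\mathbf{T}\in[0,\infty]^n$ (buyer $i$ purchases iff $v_i\ge T_i$) with $T_i=p_i/\prod_{j\in N(i)}F(T_j)$ for all $i$; $\mathcal{N}_{\mathbf{p}}$ is the set of equilibria; $\mathcal{R}(\mathbf{p},\mathbf{T})=\sum_ip_i(1-F(T_i))$; $p\cdot\mathbf{1}$ is the uniform price vector. $F$ is regular: atomless, supported on an interval in $[0,\infty)$ with positive density $f$ there, and $\phi(x)=x-\frac{1-F(x)}{f(x)}$ non-decreasing. $F^{-1}(q)=\min\{x:F(x)=q\}$.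 *)

theory Defs
  imports "HOL-Analysis.Analysis"
begin

definition simple_graph :: "nat \<Rightarrow> (nat \<Rightarrow> nat \<Rightarrow> bool) \<Rightarrow> bool" where
  "simple_graph n E \<longleftrightarrow> (\<forall>i j. E i j \<longrightarrow> i < n \<and> j < n \<and> i \<noteq> j \<and> E j i)"

definition nbhd :: "nat \<Rightarrow> (nat \<Rightarrow> nat \<Rightarrow> bool) \<Rightarrow> nat \<Rightarrow> nat set" where
  "nbhd n E i = {j. j < n \<and> E i j}"

definition regular_graph :: "nat \<Rightarrow> (nat \<Rightarrow> nat \<Rightarrow> bool) \<Rightarrow> nat \<Rightarrow> bool" where
  "regular_graph n E d \<longleftrightarrow> simple_graph n E \<and> (\<forall>i<n. card (nbhd n E i) = d)"

definition cdf :: "(real \<Rightarrow> real) \<Rightarrow> bool" where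
  "cdf F \<longleftrightarrow> mono F \<and> (F \<longlongrightarrow> 0) at_bot \<and> (F \<longlongrightarrow> 1) at_top
     \<and> (\<forall>x. continuous (at_right x) F)"

definition virt_val :: "(real \<Rightarrow> real) \<Rightarrow> (real \<Rightarrow> real) \<Rightarrow> real \<Rightarrow> real" where
  "virt_val F f x = x - (1 - F x) / f x"

definition regular_dist :: "(real \<Rightarrow> real) \<Rightarrow> (real \<Rightarrow> real) \<Rightarrow> bool" where
  "regular_dist F f \<longleftrightarrow> cdf F \<and> continuous_on UNIV F \<and>
     (\<exists>S. is_interval S \<and> S \<subseteq> {0..} \<and> interior S \<noteq> {} \<and>
        (\<forall>x. (\<forall>s\<in>S. x \<le> s) \<longrightarrow> F x = 0) \<and>
        (\<forall>x. (\<forall>s\<in>S. s \<le> x) \<longrightarrow> F x = 1) \<and>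
        (\<forall>x\<in>interior S. (F has_real_derivative f x) (at x) \<and> f x > 0) \<and>
        mono_on (interior S) (virt_val F f))"

definition quantile :: "(real \<Rightarrow> real) \<Rightarrow> real \<Rightarrow> real" where
  "quantile F q = (LEAST x. F x = q)"

definition revenue :: "nat \<Rightarrow> (real \<Rightarrow> real) \<Rightarrow> (nat \<Rightarrow> real) \<Rightarrow> (nat \<Rightarrow> real) \<Rightarrow> real" where
  "revenue n F p T = (\<Sum>i<n. p i * (1 - F (T i)))"

end

theory Submission
  imports Defs
begin


lemma rbound:
  fixes d :: nat assumes d: "d \<ge> 2"
  shows "(1 - 1 / real d) ^ (d+1) \<ge> 1/16"
proof -
  define m where "m = d - 1"
  have m1: "m \<ge> 1" and dm: "d = m + 1" using d by (auto simp: m_def)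
  define r where "r = 1 - 1 / real d"
  have mp: "real m > 0" using m1 by simp
  have r': "r = real m / (real m + 1)" unfolding r_def dm using mp by (simp add: field_simps)
  have "real m + real m * real m > 0" using mp by (simp add: add_pos_pos)
  hence r: "r * (1 + 1 / real m) = 1" unfolding r' using mp by (simp add: field_simps)
  have "(1 + 1 / real m) ^ m \<le> exp (1 / real m) ^ m"
    by (rule power_mono) (auto simp: exp_ge_add_one_self add_nonneg_nonneg)
  also have "\<dots> = exp 1" using m1 by (simp add: exp_of_nat_mult[symmetric])
  also have "\<dots> \<le> 3" by (rule exp_le)
  finally have A: "(1 + 1 / real m) ^ m \<le> 3" .
  have Xp: "(1 + 1 / real m) ^ m > 0" using mp by (intro zero_less_power) (simp add: add_pos_pos)
  have "r ^ m * (1 + 1 / real m) ^ m = 1" using r by (metis power_mult_distrib power_one)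
  moreover have gen: "\<And>a X::real. a*X=1 \<Longrightarrow> X>0 \<Longrightarrow> a = 1/X" by (simp add: field_simps)
  ultimately have "r ^ m = 1 / (1 + 1 / real m) ^ m" using Xp by blast
  also have "\<dots> \<ge> 1/3" using A Xp by (intro divide_left_mono) auto
  finally have B: "r ^ m \<ge> 1/3" .
  have r2: "r \<ge> 1/2" using d by (simp add: r_def field_simps)
  hence "r^2 \<ge> (1/2)^2" by (rule power_mono) simp
  hence "r ^ m * r^2 \<ge> 1/3 * (1/2)^2" using B
    by (intro mult_mono) auto
  hence e1: "r ^ m * r^2 \<ge> 1/12" by (simp add: power2_eq_square)
  have e2: "r ^ (d+1) = r ^ m * r^2" unfolding dm by (simp add: power_add power2_eq_square)
  have "r ^ (d+1) \<ge> 1/12" using e1 e2 by linarith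
  thus ?thesis unfolding r_def by simp
qed

lemma sbound:
  fixes d :: nat and s :: real assumes d: "d \<ge> 1" and s: "0 \<le> s" "s \<le> 1"
  shows "s ^ d * (1 - s) \<le> 1 / real d"
proof -
  define q where "q = 1 - s"
  have q: "0 \<le> q" "q \<le> 1" using s by (auto simp: q_def)
  have bern: "1 + real d * q \<le> (1 + q) ^ d" using Bernoulli_inequality[of q d] q by simp
  have "s ^ d * (1 + q) ^ d = (1 - q^2) ^ d" by (simp add: q_def power_mult_distrib[symmetric] power2_eq_square algebra_simps)
  also have "\<dots> \<le> 1" using q by (intro power_le_one) (auto simp: power_le_one)
  finally have C: "s ^ d * (1 + q) ^ d \<le> 1" .
  have sd: "s ^ d \<ge> 0" using s by simp
  have "s ^ d * (1 + real d * q) \<le> s ^ d * (1 + q) ^ d" using bern sd by (rule mult_left_mono)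
  with C have D: "s ^ d * (1 + real d * q) \<le> 1" by linarith
  have "s ^ d * q * real d \<le> s ^ d * (1 + real d * q)" using sd by (simp add: algebra_simps)
  with D have "s ^ d * q * real d \<le> 1" by linarith
  thus ?thesis using d by (simp add: q_def field_simps)
qed



lemma intS:
  fixes S :: "real set"
  assumes "is_interval S" "s1 \<in> S" "s2 \<in> S" "s1 < y" "y < s2"
  shows "y \<in> interior S"
proof -
  have iv1: "\<forall>a\<in>S. \<forall>b\<in>S. \<forall>x. a \<le> x \<and> x \<le> b \<longrightarrow> x \<in> S"
    using assms(1) is_interval_1 by blast
  have "{s1<..<s2} \<subseteq> S"
  proof
    fix z assume "z \<in> {s1<..<s2}"
    hence "s1 \<le> z" "z \<le> s2" by auto
    thus "z \<in> S" using iv1 assms(2,3) by blast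
  qed
  hence "{s1<..<s2} \<subseteq> interior S" by (intro interior_maximal) auto
  moreover have "y \<in> {s1<..<s2}" using assms(4,5) by simp
  ultimately show ?thesis by blast
qed

lemma key:
  fixes F f :: "real \<Rightarrow> real" and S :: "real set"
  assumes cont: "continuous_on UNIV F"
  and iv: "is_interval S" and S0: "S \<subseteq> {0..}"
  and F0: "\<forall>x. (\<forall>s\<in>S. x \<le> s) \<longrightarrow> F x = 0"
  and der: "\<forall>x\<in>interior S. (F has_real_derivative f x) (at x) \<and> f x > 0"
  and mo: "mono_on (interior S) (virt_val F f)"
  and x: "s1 \<in> S" "s1 < x" "s2 \<in> S" "x < s2"
  shows "F x * (1 - F x) \<le> x * f x"
proof -
  have ne: "S \<noteq> {}" using x by auto
  have bdd: "bdd_below S" using S0 by (auto simp: bdd_below_def)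
  define a where "a = Inf S"
  have aS: "\<forall>s\<in>S. a \<le> s" using bdd by (auto simp: a_def cInf_lower)
  have a0: "a \<ge> 0" unfolding a_def using ne S0 by (intro cInf_greatest) auto
  have Fa: "F a = 0" using F0 aS by blast
  have ax: "a < x" using aS x by force
  have xi: "x \<in> interior S" using intS[OF iv x(1) x(3) x(2) x(4)] .
  define ph where "ph = virt_val F f x"
  define G where "G = (\<lambda>y. y * (1 - F y) + ph * F y)"
  have "G a \<le> G x"
  proof (rule DERIV_nonneg_imp_increasing_open[of a x G])
    show "a \<le> x" using ax by simp
    show "continuous_on {a..x} G" unfolding G_def
      using continuous_on_subset[OF cont]
      by (intro continuous_intros) auto
    fix y assume y: "a < y" "y < x"
    obtain s where s: "s \<in> S" "s < y" using y(1) ne bdd unfolding a_def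
      by (auto simp: cInf_less_iff)
    have xS: "x \<in> S" using xi interior_subset by blast
    have yi: "y \<in> interior S" using intS[OF iv s(1) xS s(2) y(2)] .
    have dF: "(F has_real_derivative f y) (at y)" and fy: "f y > 0" using der yi by auto
    have "(G has_real_derivative (1 * (1 - F y) + y * (- f y) + ph * f y)) (at y)"
      unfolding G_def by (auto intro!: derivative_eq_intros dF simp: algebra_simps)
    moreover have "virt_val F f y \<le> ph" unfolding ph_def
      using mo yi xi y by (auto simp: mono_on_def)
    hence "1 * (1 - F y) + y * (- f y) + ph * f y \<ge> 0"
    proof -
      assume h: "virt_val F f y \<le> ph"
      have "1 * (1 - F y) + y * (- f y) + ph * f y = f y * (ph - virt_val F f y)"
        using fy by (simp add: virt_val_def field_simps)
      thus ?thesis using h fy by simp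
    qed
    ultimately show "\<exists>z. (G has_real_derivative z) (at y) \<and> z \<ge> 0" by blast
  qed
  moreover have "G a = a" using Fa by (simp add: G_def)
  ultimately have Gx: "G x \<ge> 0" using a0 by simp
  have fx: "f x > 0" using der xi by auto
  have "G x = x - F x * (1 - F x) / f x" using fx
    by (simp add: G_def ph_def virt_val_def field_simps)
  hence "F x * (1 - F x) / f x \<le> x" using Gx by simp
  thus ?thesis using fx by (simp add: field_simps)
qed


lemma kmono:
  fixes F f :: "real \<Rightarrow> real" and S :: "real set"
  assumes cont: "continuous_on UNIV F" and mF: "mono F"
  and iv: "is_interval S" and S0: "S \<subseteq> {0..}"
  and F0: "\<forall>x. (\<forall>s\<in>S. x \<le> s) \<longrightarrow> F x = 0"
  and der: "\<forall>x\<in>interior S. (F has_real_derivative f x) (at x) \<and> f x > 0"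
  and mo: "mono_on (interior S) (virt_val F f)"
  and t: "s1 \<in> S" "s1 < t" and x: "x < s2" "s2 \<in> S" and tx: "t \<le> x"
  and Ft: "F t > 0"
  shows "x * (1 - F x) / F x \<le> t * (1 - F t) / F t"
proof (rule DERIV_nonpos_imp_decreasing_open[of t x "\<lambda>y. y * (1 - F y) / F y", OF tx])
  have Fpos: "\<And>y. t \<le> y \<Longrightarrow> F y > 0" using monoD[OF mF] Ft by (meson less_le_trans)
  show "continuous_on {t..x} (\<lambda>y. y * (1 - F y) / F y)"
    using continuous_on_subset[OF cont] Fpos
    by (intro continuous_intros) (auto, metis atLeastAtMost_iff less_irrefl)
  fix y assume y: "t < y" "y < x"
  have yi: "y \<in> interior S" using intS[OF iv t(1) x(2)] t y x by auto
  have dF: "(F has_real_derivative f y) (at y)" and fy: "f y > 0" using der yi by auto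
  have Fy: "F y > 0" using Fpos y by simp
  have k: "F y * (1 - F y) \<le> y * f y"
    using key[OF cont iv S0 F0 der mo, of s1 y s2] t x y by auto
  have "((\<lambda>y. y * (1 - F y) / F y) has_real_derivative
        ((1 * (1 - F y) + y * (- f y)) * F y - y * (1 - F y) * f y) / (F y * F y)) (at y)"
    using Fy by (auto intro!: derivative_eq_intros dF simp: algebra_simps)
  moreover have "((1 * (1 - F y) + y * (- f y)) * F y - y * (1 - F y) * f y) / (F y * F y) \<le> 0"
  proof -
    have "(1 * (1 - F y) + y * (- f y)) * F y - y * (1 - F y) * f y = F y * (1 - F y) - y * f y"
      by (simp add: algebra_simps)
    also have "\<dots> \<le> 0" using k by simp
    finally show ?thesis using Fy by (simp add: divide_nonpos_pos)
  qed
  ultimately show "\<exists>z. ((\<lambda>y. y * (1 - F y) / F y) has_real_derivative z) (at y) \<and> z \<le> 0" by blast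
qed



theorem lemma4p2:
  fixes n d :: nat and E :: "nat \<Rightarrow> nat \<Rightarrow> bool"
    and F f :: "real \<Rightarrow> real" and T p p' T' :: real
  assumes "d \<ge> 2"
    and "regular_graph n E d"
    and "regular_dist F f"
    and "T = quantile F (1 - 1 / real d)"
    and "p = T * (1 - 1 / real d) ^ d"
    and "p' > 0"
    and "T' * F T' ^ d = p'"
  shows "revenue n F (\<lambda>_. p) (\<lambda>_. T) \<ge> (1/16) * revenue n F (\<lambda>_. p') (\<lambda>_. T')"
proof -
  have d2: "d \<ge> 2" by fact
  have cd: "cdf F" and cont: "continuous_on UNIV F"
    using assms(3) unfolding regular_dist_def by auto
  from assms(3) obtain S where iv: "is_interval S" and S0: "S \<subseteq> {0..}"
    and F0: "\<forall>x. (\<forall>s\<in>S. x \<le> s) \<longrightarrow> F x = 0"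
    and F1: "\<forall>x. (\<forall>s\<in>S. s \<le> x) \<longrightarrow> F x = 1"
    and der: "\<forall>x\<in>interior S. (F has_real_derivative f x) (at x) \<and> f x > 0"
    and mo: "mono_on (interior S) (virt_val F f)"
    unfolding regular_dist_def by blast
  have mF: "mono F" and lb: "(F \<longlongrightarrow> 0) at_bot" and lt: "(F \<longlongrightarrow> 1) at_top"
    using cd unfolding cdf_def by auto
  have Fge0: "F x \<ge> 0" for x
  proof (rule tendsto_upperbound[OF lb])
    show "eventually (\<lambda>y. F x \<ge> F y) at_bot"
      unfolding eventually_at_bot_linorder using monoD[OF mF] by blast
  qed simp
  have Fle1: "F x \<le> 1" for x
  proof (rule tendsto_lowerbound[OF lt])
    show "eventually (\<lambda>y. F x \<le> F y) at_top"
      unfolding eventually_at_top_linorder using monoD[OF mF] by blast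
  qed simp
  define r where "r = 1 - 1 / real d"
  have r12: "r \<ge> 1/2" "r < 1" using d2 by (auto simp: r_def field_simps)
  have rb: "r ^ (d+1) \<ge> 1/16" using rbound[OF d2] by (simp add: r_def)
  have rd: "r ^ d \<ge> 1/16"
  proof -
    have "r ^ (d+1) \<le> r ^ d" using r12 by (simp add: mult_left_le_one_le)
    thus ?thesis using rb by linarith
  qed
  have "eventually (\<lambda>y. F y < r) at_bot" using order_tendstoD(2)[OF lb] r12 by simp
  then obtain N where N: "\<And>y. y \<le> N \<Longrightarrow> F y < r" unfolding eventually_at_bot_linorder by blast
  have "eventually (\<lambda>y. F y > r) at_top" using order_tendstoD(1)[OF lt] r12 by simp
  then obtain M where M: "\<And>y. y \<ge> M \<Longrightarrow> F y > r" unfolding eventually_at_top_linorder by blast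
  have NM: "N \<le> M"
  proof (rule ccontr)
    assume "\<not> N \<le> M"
    hence "F M \<le> F N" using monoD[OF mF] by simp
    thus False using N[of N] M[of M] by simp
  qed
  define A where "A = {x. F x = r}"
  have "\<exists>x. N \<le> x \<and> x \<le> M \<and> F x = r"
    using N[of N] M[of M] NM continuous_on_subset[OF cont]
    by (intro IVT') auto
  hence Ane: "A \<noteq> {}" by (auto simp: A_def)
  have Abdd: "bdd_below A" unfolding A_def bdd_below_def
    using N by (metis mem_Collect_eq less_irrefl linear)
  have Acl: "closed A" unfolding A_def by (rule closed_Collect_eq[OF cont]) simp
  have InfA: "Inf A \<in> A" by (rule closed_contains_Inf[OF Ane Abdd Acl])
  have "quantile F r = Inf A" unfolding quantile_def
  proof (rule Least_equality)
    show "F (Inf A) = r" using InfA by (simp add: A_def)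
    show "\<And>y. F y = r \<Longrightarrow> Inf A \<le> y" using Abdd by (auto simp: A_def cInf_lower)
  qed
  hence TA: "T = Inf A" using assms(4) by (simp add: r_def)
  have FT: "F T = r" using InfA TA by (simp add: A_def)
  obtain s1 where s1: "s1 \<in> S" "s1 < T"
  proof -
    have "\<not> (\<forall>s\<in>S. T \<le> s)" using F0 FT r12 by auto
    thus ?thesis using that by (auto simp: not_le)
  qed
  have T0: "T \<ge> 0" using s1 S0 by force
  define s where "s = F T'"
  have s01: "0 \<le> s" "s \<le> 1" using Fge0 Fle1 by (auto simp: s_def)
  have sp: "s > 0"
  proof (rule ccontr)
    assume "\<not> s > 0"
    hence "s = 0" using s01 by simp
    thus False using assms(6,7) d2 by (simp add: s_def power_0_left)
  qed
  have sdp: "s ^ d > 0" using sp by simp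
  have T'p: "T' > 0"
  proof (rule ccontr)
    assume "\<not> T' > 0"
    hence "T' * s ^ d \<le> 0" using sdp by (simp add: mult_nonpos_nonneg)
    thus False using assms(6,7) by (simp add: s_def)
  qed
  have p'eq: "p' = T' * s ^ d" using assms(7) by (simp add: s_def)
  have pr: "p = T * r ^ d" using assms(5) unfolding r_def .
  have omr: "1 - r = 1 / real d" unfolding r_def by simp
  have peq: "p * (1 - r) = T * r ^ d * (1 - r)" using pr by simp
  have main: "p' * (1 - s) \<le> 16 * (p * (1 - r))"
  proof (cases "T' \<le> T")
    case True
    have d1: "d \<ge> 1" using d2 by simp
    have "p' * (1 - s) = T' * (s ^ d * (1 - s))" by (simp add: p'eq)
    also have "\<dots> \<le> T' * (1 / real d)"
      using sbound[OF d1 s01] T'p by (intro mult_left_mono) auto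
    also have "\<dots> \<le> T * (1 / real d)" using True by (intro mult_right_mono) auto
    also have "\<dots> \<le> T * (16 * r ^ d * (1 / real d))"
      using rd T0 by (intro mult_left_mono) (auto simp: divide_simps)
    also have "\<dots> = 16 * (p * (1 - r))" unfolding pr omr by simp
    finally show ?thesis .
  next
    case False
    have sr: "s \<ge> r" using monoD[OF mF, of T T'] False FT by (simp add: s_def)
    have RHS0: "16 * (p * (1 - r)) \<ge> 0" using peq T0 r12 by simp
    show ?thesis
    proof (cases "s = 1")
      case True thus ?thesis using RHS0 by simp
    next
      case s1': False
      obtain s2 where s2: "s2 \<in> S" "T' < s2"
      proof -
        have "\<not> (\<forall>s\<in>S. s \<le> T')" using F1 s1' by (auto simp: s_def)
        thus ?thesis using that by (auto simp: not_le)
      qed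
      have K: "T' * (1 - s) / s \<le> T * (1 - r) / r"
        using kmono[OF cont mF iv S0 F0 der mo s1 s2(2) s2(1), of ] False FT r12
        by (simp add: s_def)
      have k0: "T' * (1 - s) / s \<ge> 0" using T'p s01 sp by simp
      have "p' * (1 - s) = (T' * (1 - s) / s) * s ^ (d+1)" using sp by (simp add: p'eq field_simps)
      also have "\<dots> \<le> (T' * (1 - s) / s) * 1"
        using k0 power_le_one[OF s01, of "d+1"] by (intro mult_left_mono) auto
      also have "\<dots> \<le> T * (1 - r) / r" using K by simp
      also have "\<dots> = (T * (1 - r) / r) * 1" by simp
      also have "\<dots> \<le> (T * (1 - r) / r) * (16 * r ^ (d+1))"
        using rb T0 r12 by (intro mult_left_mono) auto
      also have "\<dots> = 16 * (p * (1 - r))" using r12 by (simp add: peq field_simps)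
      finally show ?thesis .
    qed
  qed
  have L: "revenue n F (\<lambda>_. p) (\<lambda>_. T) = real n * (p * (1 - r))" by (simp add: revenue_def FT)
  have R: "revenue n F (\<lambda>_. p') (\<lambda>_. T') = real n * (p' * (1 - s))" by (simp add: revenue_def s_def)
  have "real n * (p' * (1 - s)) \<le> real n * (16 * (p * (1 - r)))"
    using main by (intro mult_left_mono) auto
  thus ?thesis unfolding L R by simp
qed

end
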